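(* For all integers $t\geq 1$ and $N\geq 0$: $\mathfrak{m}_{\mathrm{odd}}(-2,t;8N+r)\equiv 0\pmod 4$ for $r\in\{3,6\}$; $\mathfrak{m}_{\mathrm{odd}}(-2,t;9N+r)\equiv 0\pmod 4$ for $r\in\{3,6\}$; $\mathfrak{m}_{\mathrm{odd}}(-2,t;8N+7)\equiv 0\pmod 8$.
   Context: For $a\in\{-2,-1,0,1,2\}$ and integer $t\geq0$, the integers $\mathfrak{m}_{\mathrm{odd}}(a,t;n)$ are defined by $\sum_{n\geq0}\mathfrak{m}_{\mathrm{odd}}(a,t;n)q^n=\sum\prod_{k=1}^t\frac{q^{n_k}}{1+aq^{n_k}+q^{2n_k}}$, the sum running over all $t$-tuples of odd positive integers $n_1<n_2<\cdots<n_t$ (for $t=0$ the series is $1$). *)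

theory Defs
  imports "HOL-Computational_Algebra.Formal_Power_Series"
begin

definition modd_factor :: "int \<Rightarrow> nat \<Rightarrow> rat fps" where
  "modd_factor a k = fps_X ^ k * inverse (1 + fps_const (of_int a) * fps_X ^ k + fps_X ^ (2 * k))"

text \<open>Coefficient of q^n in the sum over t-element sets {n_1 < ... < n_t} of odd positive
  integers of the product of the factors.  Sets containing an odd number larger than n
  contribute only to coefficients of degree larger than n (each factor is divisible by q^(n_k)),
  so restricting to odd numbers at most n gives exactly the n-th coefficient.\<close>
definition modd :: "int \<Rightarrow> nat \<Rightarrow> nat \<Rightarrow> rat" where
  "modd a t n = fps_nth
     (\<Sum>S \<in> {S. S \<subseteq> {k. odd k \<and> k \<le> n} \<and> card S = t}. \<Prod>k\<in>S. modd_factor a k) n"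

end

theory Submission
  imports Defs
begin
unbundle fps_syntax

definition cg :: "nat \<Rightarrow> rat fps \<Rightarrow> rat fps \<Rightarrow> bool" where
  "cg L f g \<longleftrightarrow> fps_X ^ L dvd (f - g)"

lemma cg_refl[simp]: "cg L f f" by (simp add: cg_def)
lemma cg_sym: "cg L f g \<Longrightarrow> cg L g f"
proof -
  assume "cg L f g"
  hence "fps_X ^ L dvd - (f - g)" unfolding cg_def by (simp only: dvd_minus_iff)
  thus ?thesis unfolding cg_def by simp
qed
lemma cg_trans: "cg L f g \<Longrightarrow> cg L g h \<Longrightarrow> cg L f h"
proof -
  assume "cg L f g" "cg L g h"
  hence "fps_X ^ L dvd (f - g) + (g - h)" unfolding cg_def by (rule dvd_add)
  thus ?thesis unfolding cg_def by simp
qed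
lemma cg_add: "cg L f g \<Longrightarrow> cg L f' g' \<Longrightarrow> cg L (f + f') (g + g')"
proof -
  assume "cg L f g" "cg L f' g'"
  hence "fps_X ^ L dvd (f - g) + (f' - g')" unfolding cg_def by (rule dvd_add)
  thus ?thesis unfolding cg_def by (simp add: algebra_simps)
qed
lemma cg_diff: "cg L f g \<Longrightarrow> cg L f' g' \<Longrightarrow> cg L (f - f') (g - g')"
proof -
  assume "cg L f g" "cg L f' g'"
  hence "fps_X ^ L dvd (f - g) - (f' - g')" unfolding cg_def by (rule dvd_diff)
  thus ?thesis unfolding cg_def by (simp add: algebra_simps)
qed
lemma cg_mult: "cg L f g \<Longrightarrow> cg L f' g' \<Longrightarrow> cg L (f * f') (g * g')"
proof -
  assume a: "cg L f g" "cg L f' g'"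
  have e: "f * f' - g * g' = f * (f' - g') + (f - g) * g'" by (simp add: algebra_simps)
  have "fps_X ^ L dvd f * (f' - g') + (f - g) * g'"
    using a unfolding cg_def by (intro dvd_add dvd_mult dvd_mult2)
  thus ?thesis unfolding cg_def e .
qed
lemma cg_nth: "cg L f g \<Longrightarrow> i < L \<Longrightarrow> f $ i = g $ i"
proof -
  assume "cg L f g" "i < L"
  then obtain h where "f - g = fps_X ^ L * h" unfolding cg_def by blast
  hence "(f - g) $ i = 0" using \<open>i < L\<close> by (simp add: fps_X_power_mult_nth)
  thus ?thesis by simp
qed
lemma cg_mono: "cg L f g \<Longrightarrow> L' \<le> L \<Longrightarrow> cg L' f g"
  unfolding cg_def using le_imp_power_dvd dvd_trans by blast
lemma cg_shift: "cg M f g \<Longrightarrow> cg (M + k) (fps_X ^ k * f) (fps_X ^ k * g)"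
proof -
  assume "cg M f g"
  hence "fps_X ^ M * fps_X ^ k dvd (f - g) * fps_X ^ k" unfolding cg_def by (rule mult_dvd_mono) simp
  thus ?thesis unfolding cg_def by (simp add: power_add algebra_simps)
qed
lemma cg_zero_high: "L \<le> k \<Longrightarrow> cg L (fps_X ^ k * f) 0"
  unfolding cg_def by (simp add: dvd_mult2 le_imp_power_dvd)
lemma cg_inverse:
  assumes "cg L f g" "f $ 0 \<noteq> 0" "g $ 0 \<noteq> 0"
  shows "cg L (inverse f) (inverse g)"
proof -
  have 1: "inverse f * f = 1" "inverse g * g = 1"
    using assms(2,3) inverse_mult_eq_1 by auto
  have "inverse f * inverse g * (g - f) = inverse f * (inverse g * g) - inverse g * (inverse f * f)"
    by (simp add: algebra_simps)
  also have "\<dots> = inverse f - inverse g" using 1 by simp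
  finally have e: "inverse f - inverse g = inverse f * inverse g * (g - f)" by simp
  have "fps_X ^ L dvd (g - f)" using cg_sym[OF assms(1)] by (simp add: cg_def)
  thus ?thesis unfolding cg_def e by (rule dvd_mult)
qed
lemma cg_cancel:
  assumes "cg L (u * a) (u * b)" "u $ 0 \<noteq> 0"
  shows "cg L a b"
proof -
  have "cg L (inverse u * (u * a)) (inverse u * (u * b))" using cg_mult[OF cg_refl assms(1)] .
  moreover have "inverse u * (u * c) = c" for c
    using inverse_mult_eq_1[OF assms(2)] by (metis mult.assoc mult.left_neutral)
  ultimately show ?thesis by simp
qed

definition Od :: "nat \<Rightarrow> nat set" where "Od K = {k. odd k \<and> k < 2 * K}"

lemma Od_Suc: "Od (Suc K) = insert (2 * K + 1) (Od K)"
  unfolding Od_def by (auto, presburger)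
lemma Od_fin[simp]: "finite (Od K)" unfolding Od_def by auto
lemma Od_notin[simp]: "2 * K + 1 \<notin> Od K" "Suc (2 * K) \<notin> Od K" unfolding Od_def by auto
lemma Od_card: "card (Od K) = K"
  by (induction K) (simp_all add: Od_Suc, simp add: Od_def)
lemma Od_pos: "k \<in> Od K \<Longrightarrow> k \<ge> 1" unfolding Od_def using odd_pos by fastforce

lemma subsets_card_insert:
  assumes "finite A" "a \<notin> A"
  shows "{S. S \<subseteq> insert a A \<and> card S = Suc t} =
         {S. S \<subseteq> A \<and> card S = Suc t} \<union> insert a ` {S. S \<subseteq> A \<and> card S = t}"
proof (intro set_eqI iffI)
  fix S assume S: "S \<in> {S. S \<subseteq> insert a A \<and> card S = Suc t}"
  show "S \<in> {S. S \<subseteq> A \<and> card S = Suc t} \<union> insert a ` {S. S \<subseteq> A \<and> card S = t}"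
  proof (cases "a \<in> S")
    case True
    have fS: "finite S" using S assms(1) finite_subset by auto
    have "S = insert a (S - {a})" using True by auto
    moreover have "S - {a} \<subseteq> A" "card (S - {a}) = t" using S True fS by auto
    ultimately show ?thesis by blast
  next
    case False thus ?thesis using S by auto
  qed
next
  fix S assume S: "S \<in> {S. S \<subseteq> A \<and> card S = Suc t} \<union> insert a ` {S. S \<subseteq> A \<and> card S = t}"
  show "S \<in> {S. S \<subseteq> insert a A \<and> card S = Suc t}"
  proof (cases "S \<in> {S. S \<subseteq> A \<and> card S = Suc t}")
    case True thus ?thesis by auto
  next
    case False
    then obtain T where T: "T \<subseteq> A" "card T = t" "S = insert a T" using S by auto
    have "finite T" using T assms(1) finite_subset by auto
    moreover have "a \<notin> T" using T assms by auto
    ultimately show ?thesis using T assms by auto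
  qed
qed

lemma sum_subsets_insert:
  fixes h :: "nat \<Rightarrow> 'b::comm_ring_1"
  assumes "finite A" "a \<notin> A"
  shows "(\<Sum>S\<in>{S. S \<subseteq> insert a A \<and> card S = Suc t}. \<Prod>k\<in>S. h k) =
         (\<Sum>S\<in>{S. S \<subseteq> A \<and> card S = Suc t}. \<Prod>k\<in>S. h k) +
         h a * (\<Sum>S\<in>{S. S \<subseteq> A \<and> card S = t}. \<Prod>k\<in>S. h k)"
proof -
  have fin: "finite {S. S \<subseteq> A \<and> card S = u}" for u using assms(1) by auto
  have disj: "{S. S \<subseteq> A \<and> card S = Suc t} \<inter> insert a ` {S. S \<subseteq> A \<and> card S = t} = {}"
    using assms(2) by auto
  have inj: "inj_on (insert a) {S. S \<subseteq> A \<and> card S = t}"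
    using assms(2) unfolding inj_on_def by (metis (mono_tags, lifting) insert_ident mem_Collect_eq subsetD)
  have "(\<Sum>S\<in>insert a ` {S. S \<subseteq> A \<and> card S = t}. \<Prod>k\<in>S. h k)
      = (\<Sum>S\<in>{S. S \<subseteq> A \<and> card S = t}. \<Prod>k\<in>insert a S. h k)"
    using sum.reindex[OF inj] by simp
  also have "\<dots> = (\<Sum>S\<in>{S. S \<subseteq> A \<and> card S = t}. h a * (\<Prod>k\<in>S. h k))"
  proof (rule sum.cong)
    fix S assume "S \<in> {S. S \<subseteq> A \<and> card S = t}"
    hence "finite S" "a \<notin> S" using assms finite_subset by auto
    thus "(\<Prod>k\<in>insert a S. h k) = h a * (\<Prod>k\<in>S. h k)" by simp
  qed simp
  finally have c: "(\<Sum>S\<in>insert a ` {S. S \<subseteq> A \<and> card S = t}. \<Prod>k\<in>S. h k)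
      = h a * (\<Sum>S\<in>{S. S \<subseteq> A \<and> card S = t}. (\<Prod>k\<in>S. h k))" by (simp add: sum_distrib_left)
  show ?thesis
    unfolding subsets_card_insert[OF assms] sum.union_disjoint[OF fin finite_imageI[OF fin] disj] c ..
qed

definition fk :: "nat \<Rightarrow> rat fps" where "fk m = modd_factor (-2) m"

definition E :: "nat \<Rightarrow> nat \<Rightarrow> rat fps" where
  "E K t = (\<Sum>S\<in>{S. S \<subseteq> Od K \<and> card S = t}. \<Prod>k\<in>S. fk k)"

lemma E_0[simp]: "E K 0 = 1"
proof -
  have "{S. S \<subseteq> Od K \<and> card S = 0} = {{}}" using Od_fin finite_subset by fastforce
  thus ?thesis unfolding E_def by simp
qed
lemma E_Suc: "E (Suc K) (Suc t) = E K (Suc t) + fk (2*K+1) * E K t"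
  unfolding E_def Od_Suc by (rule sum_subsets_insert) auto
lemma E_big: "t > K \<Longrightarrow> E K t = 0"
proof -
  assume "t > K"
  have c: "card S \<le> K" if "S \<subseteq> Od K" for S
  proof -
    have "card S \<le> card (Od K)" by (rule card_mono[OF Od_fin that])
    thus ?thesis unfolding Od_card .
  qed
  have "\<not> (S \<subseteq> Od K \<and> card S = t)" for S
    using c[of S] \<open>t > K\<close> by auto
  hence e: "{S. S \<subseteq> Od K \<and> card S = t} = {}" by blast
  show ?thesis unfolding E_def e by simp
qed

lemma sq_eq: "(1 - fps_X ^ m) ^ 2 = 1 + fps_const (of_int (-2)) * fps_X ^ m + (fps_X ^ (2 * m) :: rat fps)"
proof -
  have c: "fps_const (of_int (-2)) = (-2 :: rat fps)" by (simp add: numeral_fps_const fps_const_neg)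
  have p: "(fps_X ^ (2 * m) :: rat fps) = (fps_X ^ m) ^ 2" by (simp add: power_mult mult.commute)
  have g: "(1 - a) ^ 2 = 1 + (-2) * a + a ^ 2" for a :: "rat fps" by algebra
  show ?thesis unfolding c p g ..
qed

lemma fk_mul: "m \<ge> 1 \<Longrightarrow> (1 - fps_X ^ m) ^ 2 * fk m = fps_X ^ m"
proof -
  assume m: "m \<ge> 1"
  let ?s = "(1 - fps_X ^ m) ^ 2 :: rat fps"
  have f: "fk m = fps_X ^ m * inverse ?s" unfolding fk_def modd_factor_def sq_eq ..
  have n1: "(1 - fps_X ^ m :: rat fps) $ 0 = 1" using m by simp
  have n0: "?s $ 0 = 1" unfolding power2_eq_square fps_mult_nth_0 n1 by simp
  have i: "?s * inverse ?s = 1" by (rule inverse_mult_eq_1') (simp add: n0)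
  have "?s * fk m = fps_X ^ m * (?s * inverse ?s)" unfolding f by (simp only: mult.left_commute)
  thus ?thesis unfolding i by simp
qed

definition D :: "nat \<Rightarrow> rat fps" where "D K = (\<Prod>k\<in>Od K. (1 - fps_X ^ k) ^ 2)"
lemma D_0[simp]: "D 0 = 1" by (simp add: D_def Od_def)
lemma D_Suc: "D (Suc K) = (1 - fps_X ^ (2*K+1)) ^ 2 * D K"
  unfolding D_def Od_Suc by simp
lemma D_nth0: "D K $ 0 = 1"
  by (induction K) (simp_all add: D_Suc power2_eq_square)

definition W :: "nat \<Rightarrow> nat \<Rightarrow> rat fps" where "W K t = D K * E K t"

lemma W_00: "W 0 t = (if t = 0 then 1 else 0)"
  unfolding W_def by (cases t) (simp_all add: E_big)
lemma W_Suc0: "W (Suc K) 0 = (1 - fps_X ^ (2*K+1)) ^ 2 * W K 0"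
  unfolding W_def by (simp add: D_Suc)
lemma W_SucSuc: "W (Suc K) (Suc t) = (1 - fps_X ^ (2*K+1)) ^ 2 * W K (Suc t) + fps_X ^ (2*K+1) * W K t"
proof -
  have "W (Suc K) (Suc t) = (1 - fps_X ^ (2*K+1)) ^ 2 * D K * (E K (Suc t) + fk (2*K+1) * E K t)"
    unfolding W_def D_Suc E_Suc ..
  also have "\<dots> = (1 - fps_X ^ (2*K+1)) ^ 2 * W K (Suc t) + ((1 - fps_X ^ (2*K+1)) ^ 2 * fk (2*K+1)) * W K t"
    unfolding W_def by (simp only: distrib_left mult.assoc mult.left_commute)
  also have "(1 - fps_X ^ (2*K+1)) ^ 2 * fk (2*K+1) = fps_X ^ (2*K+1)" by (rule fk_mul) simp
  finally show ?thesis by (simp only:)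
qed
lemma W_big: "t > K \<Longrightarrow> W K t = 0" unfolding W_def by (simp add: E_big)

lemma bin1: "((2*t+2) choose (t+j+2)) = ((2*t) choose (t+j)) + 2 * ((2*t) choose (t+j+1)) + ((2*t) choose (t+j+2))"
proof -
  have "((2*t+2) choose (t+j+2)) = (Suc (Suc (2*t)) choose Suc (Suc (t+j)))" by simp
  also have "\<dots> = ((2*t) choose (t+j)) + 2 * ((2*t) choose (t+j+1)) + ((2*t) choose (t+j+2))"
    by (simp only: binomial_Suc_Suc) simp
  finally show ?thesis .
qed

lemma bin0: "((2*t+2) choose (t+1)) = 2 * ((2*t) choose t) + 2 * ((2*t) choose (t+1))"
proof -
  have a: "((2*t+2) choose (t+1)) = (Suc (2*t) choose t) + (Suc (2*t) choose Suc t)"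
    using binomial_Suc_Suc[of "Suc (2*t)" t] by simp
  have b: "(Suc (2*t) choose t) = (Suc (2*t) choose Suc t)"
    using binomial_symmetric[of t "Suc (2*t)"] by (simp add: Suc_diff_le)
  have c: "(Suc (2*t) choose Suc t) = ((2*t) choose t) + ((2*t) choose (t+1))"
    using binomial_Suc_Suc[of "2*t" t] by simp
  show ?thesis using a b c by simp
qed

definition V :: "nat \<Rightarrow> nat \<Rightarrow> rat fps" where
  "V K j = (\<Sum>t\<le>K. of_nat ((2*t) choose (t+j)) * W K t)"

lemma V_shift:
  fixes K :: nat and c :: "nat \<Rightarrow> rat fps"
  defines "A \<equiv> (1 - fps_X ^ (2*K+1)) ^ 2" and "Y \<equiv> fps_X ^ (2*K+1) :: rat fps"
  shows "(\<Sum>t\<le>Suc K. c t * W (Suc K) t) =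
         A * (\<Sum>t\<le>K. c t * W K t) + Y * (\<Sum>t\<le>K. c (Suc t) * W K t)"
proof -
  have "(\<Sum>t\<le>Suc K. c t * W (Suc K) t) = c 0 * W (Suc K) 0 + (\<Sum>t\<le>K. c (Suc t) * W (Suc K) (Suc t))"
    by (rule sum.atMost_Suc_shift)
  also have "\<dots> = A * (c 0 * W K 0 + (\<Sum>t\<le>K. c (Suc t) * W K (Suc t))) + Y * (\<Sum>t\<le>K. c (Suc t) * W K t)"
    unfolding W_Suc0 W_SucSuc A_def Y_def
    by (simp add: distrib_left sum.distrib sum_distrib_left mult.left_commute)
  also have "c 0 * W K 0 + (\<Sum>t\<le>K. c (Suc t) * W K (Suc t)) = (\<Sum>t\<le>Suc K. c t * W K t)"
    by (rule sum.atMost_Suc_shift[symmetric])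
  also have "\<dots> = (\<Sum>t\<le>K. c t * W K t)" by (simp add: W_big)
  finally show ?thesis .
qed

lemma V_Suc_Suc:
  "V (Suc K) (Suc i) = (1 - fps_X ^ (2*K+1)) ^ 2 * V K (Suc i) +
     fps_X ^ (2*K+1) * (V K i + 2 * V K (Suc i) + V K (Suc (Suc i)))"
proof -
  have e: "(\<Sum>t\<le>K. of_nat ((2 * Suc t) choose (Suc t + Suc i)) * W K t) = V K i + 2 * V K (Suc i) + V K (Suc (Suc i))"
  proof -
    have "(\<Sum>t\<le>K. of_nat ((2 * Suc t) choose (Suc t + Suc i)) * W K t) =
      (\<Sum>t\<le>K. of_nat ((2*t) choose (t+i)) * W K t + 2 * (of_nat ((2*t) choose (t + Suc i)) * W K t)
           + of_nat ((2*t) choose (t + Suc (Suc i))) * W K t)"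
    proof (rule sum.cong[OF refl])
      fix t
      have "((2 * Suc t) choose (Suc t + Suc i)) = ((2*t) choose (t+i)) + 2 * ((2*t) choose (t + Suc i)) + ((2*t) choose (t + Suc (Suc i)))"
        using bin1[of t i] by (simp add: add.commute add.left_commute)
      thus "of_nat ((2 * Suc t) choose (Suc t + Suc i)) * W K t = of_nat ((2*t) choose (t+i)) * W K t + 2 * (of_nat ((2*t) choose (t + Suc i)) * W K t)
           + of_nat ((2*t) choose (t + Suc (Suc i))) * W K t"
        by (simp add: distrib_right)
    qed
    thus ?thesis unfolding V_def by (simp add: sum.distrib sum_distrib_left)
  qed
  show ?thesis unfolding V_def[of "Suc K"] V_shift e unfolding V_def ..
qed

lemma V_Suc_0:
  "V (Suc K) 0 = (1 - fps_X ^ (2*K+1)) ^ 2 * V K 0 +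
     fps_X ^ (2*K+1) * (2 * V K 0 + 2 * V K 1)"
proof -
  have e: "(\<Sum>t\<le>K. of_nat ((2 * Suc t) choose (Suc t + 0)) * W K t) = 2 * V K 0 + 2 * V K 1"
  proof -
    have "(\<Sum>t\<le>K. of_nat ((2 * Suc t) choose (Suc t + 0)) * W K t) =
      (\<Sum>t\<le>K. 2 * (of_nat ((2*t) choose (t+0)) * W K t) + 2 * (of_nat ((2*t) choose (t + 1)) * W K t))"
    proof (rule sum.cong[OF refl])
      fix t
      have "((2 * Suc t) choose (Suc t + 0)) = 2 * ((2*t) choose (t+0)) + 2 * ((2*t) choose (t + 1))"
        using bin0[of t] by simp
      thus "of_nat ((2 * Suc t) choose (Suc t + 0)) * W K t = 2 * (of_nat ((2*t) choose (t+0)) * W K t) + 2 * (of_nat ((2*t) choose (t + 1)) * W K t)"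
        by (simp add: distrib_right)
    qed
    thus ?thesis unfolding V_def by (simp add: sum.distrib sum_distrib_left)
  qed
  show ?thesis unfolding V_def[of "Suc K"] V_shift e unfolding V_def ..
qed

lemma V_0: "V 0 j = (if j = 0 then 1 else 0)"
  unfolding V_def by (simp add: W_00)

lemma V_big: "j > K \<Longrightarrow> V K j = 0"
  unfolding V_def by (intro sum.neutral) simp

lemma ident1:
  fixes x :: "'a::idom"
  assumes "Suc i \<le> K"
  shows "x^(Suc i * Suc i) * ((1 - x^(2*(2*K+1))) * (1 - x^(2*(2*K+2)))) =
    (1 - x^(2*K+1))^2 * (x^(Suc i * Suc i) * ((1 - x^(2*(K+Suc i+1))) * (1 - x^(2*(K-Suc i+1))))) +
    x^(2*K+1) * (x^(i*i) * ((1 - x^(2*(K+i+1))) * (1 - x^(2*(K+i+2)))) +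
      2 * (x^(Suc i * Suc i) * ((1 - x^(2*(K+Suc i+1))) * (1 - x^(2*(K-Suc i+1))))) +
      x^(Suc (Suc i) * Suc (Suc i)) * ((1 - x^(2*(K-Suc i))) * (1 - x^(2*(K-Suc i+1)))))"
proof -
  obtain d where K: "K = Suc i + d" using assms le_Suc_ex by blast
  define S where "S = x^(i*i)"
  define I where "I = x^i"
  define Dd where "Dd = x^d"
  have e1: "x^(Suc i * Suc i) = S * I^2 * x"
  proof -
    have "x^(Suc i * Suc i) = x^(i*i + i*2 + 1)" by (rule arg_cong[where f="\<lambda>n. x^n"]) (simp add: algebra_simps)
    thus ?thesis unfolding S_def I_def power_add power_mult by simp
  qed
  have e2: "x^(Suc (Suc i) * Suc (Suc i)) = S * I^4 * x^4"
  proof -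
    have "x^(Suc (Suc i) * Suc (Suc i)) = x^(i*i + i*4 + 4)" by (rule arg_cong[where f="\<lambda>n. x^n"]) (simp add: algebra_simps)
    thus ?thesis unfolding S_def I_def power_add power_mult by simp
  qed
  have e3: "x^(2*(2*K+1)) = Dd^4 * I^4 * x^6"
  proof -
    have "x^(2*(2*K+1)) = x^(d*4 + i*4 + 6)" by (rule arg_cong[where f="\<lambda>n. x^n"]) (simp add: K algebra_simps)
    thus ?thesis unfolding Dd_def I_def power_add power_mult by simp
  qed
  have e4: "x^(2*(2*K+2)) = Dd^4 * I^4 * x^8"
  proof -
    have "x^(2*(2*K+2)) = x^(d*4 + i*4 + 8)" by (rule arg_cong[where f="\<lambda>n. x^n"]) (simp add: K algebra_simps)
    thus ?thesis unfolding Dd_def I_def power_add power_mult by simp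
  qed
  have e5: "x^(2*K+1) = Dd^2 * I^2 * x^3"
  proof -
    have "x^(2*K+1) = x^(d*2 + i*2 + 3)" by (rule arg_cong[where f="\<lambda>n. x^n"]) (simp add: K algebra_simps)
    thus ?thesis unfolding Dd_def I_def power_add power_mult by simp
  qed
  have e6: "x^(2*(K+Suc i+1)) = Dd^2 * I^4 * x^6"
  proof -
    have "x^(2*(K+Suc i+1)) = x^(d*2 + i*4 + 6)" by (rule arg_cong[where f="\<lambda>n. x^n"]) (simp add: K algebra_simps)
    thus ?thesis unfolding Dd_def I_def power_add power_mult by simp
  qed
  have e7: "x^(2*(K-Suc i+1)) = Dd^2 * x^2"
  proof -
    have "x^(2*(K-Suc i+1)) = x^(d*2 + 2)" by (rule arg_cong[where f="\<lambda>n. x^n"]) (simp add: K algebra_simps)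
    thus ?thesis unfolding Dd_def I_def power_add power_mult by simp
  qed
  have e8: "x^(2*(K+i+1)) = Dd^2 * I^4 * x^4"
  proof -
    have "x^(2*(K+i+1)) = x^(d*2 + i*4 + 4)" by (rule arg_cong[where f="\<lambda>n. x^n"]) (simp add: K algebra_simps)
    thus ?thesis unfolding Dd_def I_def power_add power_mult by simp
  qed
  have e9: "x^(2*(K+i+2)) = Dd^2 * I^4 * x^6"
  proof -
    have "x^(2*(K+i+2)) = x^(d*2 + i*4 + 6)" by (rule arg_cong[where f="\<lambda>n. x^n"]) (simp add: K algebra_simps)
    thus ?thesis unfolding Dd_def I_def power_add power_mult by simp
  qed
  have e10: "x^(2*(K-Suc i)) = Dd^2"
  proof -
    have "x^(2*(K-Suc i)) = x^(d*2)" by (rule arg_cong[where f="\<lambda>n. x^n"]) (simp add: K algebra_simps)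
    thus ?thesis unfolding Dd_def I_def power_add power_mult by simp
  qed
  have e11: "x^(i*i) = S" unfolding S_def ..
  show ?thesis unfolding e1 e2 e3 e4 e5 e6 e7 e8 e9 e10 e11 by algebra
qed

lemma ident0:
  fixes x :: "'a::idom"
  shows "(1 - x^(2*(2*K+1))) * (1 - x^(2*(2*K+2))) =
    (1 - x^(2*K+1))^2 * ((1 - x^(2*(K+0+1))) * (1 - x^(2*(K-0+1)))) +
    x^(2*K+1) * (2 * ((1 - x^(2*(K+0+1))) * (1 - x^(2*(K-0+1)))) +
      2 * (x^(1*1) * ((1 - x^(2*(K-0))) * (1 - x^(2*(K-0+1))))))"
proof -
  define Dd where "Dd = x^K"
  have e3: "x^(2*(2*K+1)) = Dd^4 * x^2"
  proof -
    have "x^(2*(2*K+1)) = x^(K*4 + 2)" by (rule arg_cong[where f="\<lambda>n. x^n"]) (simp add: algebra_simps)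
    thus ?thesis unfolding Dd_def power_add power_mult by simp
  qed
  have e4: "x^(2*(2*K+2)) = Dd^4 * x^4"
  proof -
    have "x^(2*(2*K+2)) = x^(K*4 + 4)" by (rule arg_cong[where f="\<lambda>n. x^n"]) (simp add: algebra_simps)
    thus ?thesis unfolding Dd_def power_add power_mult by simp
  qed
  have e5: "x^(2*K+1) = Dd^2 * x"
  proof -
    have "x^(2*K+1) = x^(K*2 + 1)" by (rule arg_cong[where f="\<lambda>n. x^n"]) (simp add: algebra_simps)
    thus ?thesis unfolding Dd_def power_add power_mult by simp
  qed
  have e6: "x^(2*(K+0+1)) = Dd^2 * x^2"
  proof -
    have "x^(2*(K+0+1)) = x^(K*2 + 2)" by (rule arg_cong[where f="\<lambda>n. x^n"]) (simp add: algebra_simps)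
    thus ?thesis unfolding Dd_def power_add power_mult by simp
  qed
  have e7: "x^(2*(K-0+1)) = Dd^2 * x^2"
  proof -
    have "x^(2*(K-0+1)) = x^(K*2 + 2)" by (rule arg_cong[where f="\<lambda>n. x^n"]) (simp add: algebra_simps)
    thus ?thesis unfolding Dd_def power_add power_mult by simp
  qed
  have e10: "x^(2*(K-0)) = Dd^2"
  proof -
    have "x^(2*(K-0)) = x^(K*2)" by (rule arg_cong[where f="\<lambda>n. x^n"]) (simp add: algebra_simps)
    thus ?thesis unfolding Dd_def power_add power_mult by simp
  qed
  have e11: "x^(1*1) = x" by simp
  show ?thesis unfolding e3 e4 e5 e6 e7 e10 e11 by algebra
qed

definition P :: "nat \<Rightarrow> rat fps" where "P r = (\<Prod>i\<in>{1..r}. (1 - fps_X ^ (2*i)))"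

lemma P_0[simp]: "P 0 = 1" by (simp add: P_def)
lemma P_Suc: "P (Suc r) = P r * (1 - fps_X ^ (2 * Suc r))"
proof -
  have "{1..Suc r} = insert (Suc r) {1..r}" by auto
  thus ?thesis unfolding P_def by (simp add: mult.commute)
qed
lemma P_SS: "P (Suc (Suc r)) = P r * ((1 - fps_X ^ (2 * (r+1))) * (1 - fps_X ^ (2 * (r+2))))"
  unfolding P_Suc by (simp add: mult.assoc)
lemma P_nth0: "P r $ 0 = 1"
proof (induction r)
  case (Suc r) thus ?case unfolding P_Suc fps_mult_nth_0 by simp
qed simp
lemma P_inv: "P r * inverse (P r) = 1"
  by (rule inverse_mult_eq_1') (simp add: P_nth0)

definition g :: "nat \<Rightarrow> nat \<Rightarrow> rat fps" where
  "g K j = (if j \<le> K then P (2*K) * inverse (P (K+j)) * inverse (P (K-j)) else 0)"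
definition Q :: "nat \<Rightarrow> nat \<Rightarrow> rat fps" where
  "Q K j = fps_X ^ (j*j) * g K j"
definition M :: "nat \<Rightarrow> nat \<Rightarrow> rat fps" where
  "M K j = P (K+1+j) * P (K+1-j)"

lemma g_M: "j \<le> K \<Longrightarrow> g K j * (P (K+j) * P (K-j)) = P (2*K)"
proof -
  assume "j \<le> K"
  hence "g K j * (P (K+j) * P (K-j)) = P (2*K) * (P (K+j) * inverse (P (K+j))) * (P (K-j) * inverse (P (K-j)))"
    unfolding g_def by (simp add: mult_ac)
  thus ?thesis unfolding P_inv by simp
qed

lemma M_nth0: "M K j $ 0 = 1" unfolding M_def fps_mult_nth_0 P_nth0 by simp

lemma gA: "j \<le> Suc K \<Longrightarrow> g (Suc K) j * M K j = P (2*K) * ((1 - fps_X^(2*(2*K+1))) * (1 - fps_X^(2*(2*K+2))))"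
proof -
  assume j: "j \<le> Suc K"
  have "g (Suc K) j * M K j = g (Suc K) j * (P (Suc K + j) * P (Suc K - j))" unfolding M_def by simp
  also have "\<dots> = P (2 * Suc K)" by (rule g_M[OF j])
  also have "2 * Suc K = Suc (Suc (2*K))" by simp
  also have "P (Suc (Suc (2*K))) = P (2*K) * ((1 - fps_X^(2*(2*K+1))) * (1 - fps_X^(2*(2*K+2))))"
    unfolding P_SS ..
  finally show ?thesis .
qed

lemma gB: "j \<le> K \<Longrightarrow> g K j * M K j = P (2*K) * ((1 - fps_X^(2*(K+j+1))) * (1 - fps_X^(2*(K-j+1))))"
proof -
  assume j: "j \<le> K"
  have "M K j = P (Suc (K+j)) * P (Suc (K-j))" unfolding M_def using j by (simp add: Suc_diff_le)
  also have "\<dots> = (P (K+j) * P (K-j)) * ((1 - fps_X^(2*(K+j+1))) * (1 - fps_X^(2*(K-j+1))))"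
    unfolding P_Suc by (simp add: mult_ac)
  finally have "g K j * M K j = (g K j * (P (K+j) * P (K-j))) * ((1 - fps_X^(2*(K+j+1))) * (1 - fps_X^(2*(K-j+1))))"
    by (simp add: mult_ac)
  thus ?thesis unfolding g_M[OF j] .
qed

lemma gC: "j \<le> K \<Longrightarrow> g K (Suc j) * M K j = P (2*K) * ((1 - fps_X^(2*(K-j))) * (1 - fps_X^(2*(K-j+1))))"
proof (cases "j = K")
  case True
  thus ?thesis by (simp add: g_def)
next
  case False
  assume "j \<le> K"
  hence j: "Suc j \<le> K" using False by simp
  have ar: "K + 1 - j = Suc (Suc (K - Suc j))" "K + 1 + j = K + Suc j" using j by arith+
  have "M K j = P (K + Suc j) * P (Suc (Suc (K - Suc j)))" unfolding M_def ar ..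
  also have "\<dots> = (P (K + Suc j) * P (K - Suc j)) * ((1 - fps_X^(2*(K-j))) * (1 - fps_X^(2*(K-j+1))))"
  proof -
    have a: "K - Suc j + 1 = K - j" "K - Suc j + 2 = K - j + 1" using j by auto
    show ?thesis unfolding P_SS a by (simp add: mult_ac)
  qed
  finally have "g K (Suc j) * M K j = (g K (Suc j) * (P (K + Suc j) * P (K - Suc j))) * ((1 - fps_X^(2*(K-j))) * (1 - fps_X^(2*(K-j+1))))"
    by (simp add: mult_ac)
  thus ?thesis unfolding g_M[OF j] .
qed

lemma gD: "i \<le> K \<Longrightarrow> g K i * M K (Suc i) = P (2*K) * ((1 - fps_X^(2*(K+i+1))) * (1 - fps_X^(2*(K+i+2))))"
proof -
  assume i: "i \<le> K"
  have "M K (Suc i) = P (Suc (Suc (K+i))) * P (K-i)" unfolding M_def by simp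
  also have "\<dots> = (P (K+i) * P (K-i)) * ((1 - fps_X^(2*(K+i+1))) * (1 - fps_X^(2*(K+i+2))))"
    unfolding P_SS by (simp add: mult_ac)
  finally have "g K i * M K (Suc i) = (g K i * (P (K+i) * P (K-i))) * ((1 - fps_X^(2*(K+i+1))) * (1 - fps_X^(2*(K+i+2))))"
    by (simp add: mult_ac)
  thus ?thesis unfolding g_M[OF i] .
qed

lemma distr_gen:
  fixes A Y s0 s1 s2 g0 g1 g2 m p b c d :: "'a::comm_ring_1"
  assumes "g1 * m = p * b" "g0 * m = p * d" "g2 * m = p * c"
  shows "(A * (s1 * g1) + Y * (s0 * g0 + 2 * (s1 * g1) + s2 * g2)) * m =
         p * (A * (s1 * b) + Y * (s0 * d + 2 * (s1 * b) + s2 * c))"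
proof -
  have "(A * (s1 * g1) + Y * (s0 * g0 + 2 * (s1 * g1) + s2 * g2)) * m =
        A * (s1 * (g1 * m)) + Y * (s0 * (g0 * m) + 2 * (s1 * (g1 * m)) + s2 * (g2 * m))"
    by (simp add: algebra_simps)
  also have "\<dots> = p * (A * (s1 * b) + Y * (s0 * d + 2 * (s1 * b) + s2 * c))"
    unfolding assms by (simp add: algebra_simps)
  finally show ?thesis .
qed

lemma distr_gen0:
  fixes A Y g0 g1 m p b c :: "'a::comm_ring_1"
  assumes "g0 * m = p * b" "g1 * m = p * c"
  shows "(A * (1 * g0) + Y * (2 * (1 * g0) + 2 * (x * g1))) * m =
         p * (A * b + Y * (2 * b + 2 * (x * c)))"
proof -
  have "(A * (1 * g0) + Y * (2 * (1 * g0) + 2 * (x * g1))) * m =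
        A * (g0 * m) + Y * (2 * (g0 * m) + 2 * (x * (g1 * m)))"
    by (simp add: algebra_simps)
  also have "\<dots> = p * (A * b + Y * (2 * b + 2 * (x * c)))"
    unfolding assms by (simp add: algebra_simps)
  finally show ?thesis .
qed

lemma M_cancel: "a * M K j = b * M K j \<Longrightarrow> a = b"
proof -
  assume "a * M K j = b * M K j"
  moreover have "M K j \<noteq> 0" using M_nth0[of K j] by auto
  ultimately show "a = b" by simp
qed

lemma g_diag: "g K K = 1"
proof -
  have "g K K = P (2*K) * inverse (P (2*K))" unfolding g_def by (simp add: mult_2)
  thus ?thesis unfolding P_inv .
qed

lemma g_big: "j > K \<Longrightarrow> g K j = 0" unfolding g_def by simp

lemma Q_rec1:
  "Q (Suc K) (Suc i) = (1 - fps_X ^ (2*K+1)) ^ 2 * Q K (Suc i) +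
     fps_X ^ (2*K+1) * (Q K i + 2 * Q K (Suc i) + Q K (Suc (Suc i)))"
proof (cases "Suc i \<le> K")
  case True
  have L: "Q (Suc K) (Suc i) * M K (Suc i) = P (2*K) * (fps_X^(Suc i * Suc i) *
      ((1 - fps_X^(2*(2*K+1))) * (1 - fps_X^(2*(2*K+2)))))"
    unfolding Q_def mult.assoc gA[of "Suc i" K, OF le_SucI[OF True]] by (simp only: mult.left_commute)
  have R: "((1 - fps_X ^ (2*K+1)) ^ 2 * Q K (Suc i) +
     fps_X ^ (2*K+1) * (Q K i + 2 * Q K (Suc i) + Q K (Suc (Suc i)))) * M K (Suc i) =
     P (2*K) * ((1 - fps_X ^ (2*K+1)) ^ 2 * (fps_X^(Suc i * Suc i) * ((1 - fps_X^(2*(K+Suc i+1))) * (1 - fps_X^(2*(K-Suc i+1))))) +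
      fps_X ^ (2*K+1) * (fps_X^(i*i) * ((1 - fps_X^(2*(K+i+1))) * (1 - fps_X^(2*(K+i+2)))) +
      2 * (fps_X^(Suc i * Suc i) * ((1 - fps_X^(2*(K+Suc i+1))) * (1 - fps_X^(2*(K-Suc i+1))))) +
      fps_X^(Suc (Suc i) * Suc (Suc i)) * ((1 - fps_X^(2*(K-Suc i))) * (1 - fps_X^(2*(K-Suc i+1))))))"
    unfolding Q_def
    by (rule distr_gen[OF gB[OF True] gD[OF Suc_leD[OF True]] gC[OF True]])
  show ?thesis
    by (rule M_cancel[of _ K "Suc i"]) (simp only: L R ident1[OF True])
next
  case False
  show ?thesis
  proof (cases "i = K")
    case True
    have "Q (Suc K) (Suc i) = fps_X ^ (Suc K * Suc K)" unfolding Q_def True g_diag by simp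
    moreover have "Q K (Suc i) = 0" "Q K (Suc (Suc i)) = 0" unfolding Q_def True by (simp_all add: g_big)
    moreover have "Q K i = fps_X ^ (K * K)" unfolding Q_def True g_diag by simp
    moreover have "fps_X ^ (Suc K * Suc K) = (fps_X ^ (2*K+1) * fps_X ^ (K*K) :: rat fps)"
      by (simp add: power_add[symmetric] algebra_simps)
    ultimately show ?thesis by simp
  next
    case False
    hence "i > K" using \<open>\<not> Suc i \<le> K\<close> by simp
    thus ?thesis unfolding Q_def by (simp add: g_big)
  qed
qed

lemma Q_rec0:
  "Q (Suc K) 0 = (1 - fps_X ^ (2*K+1)) ^ 2 * Q K 0 +
     fps_X ^ (2*K+1) * (2 * Q K 0 + 2 * Q K 1)"
proof -
  have L: "Q (Suc K) 0 * M K 0 = P (2*K) * ((1 - fps_X^(2*(2*K+1))) * (1 - fps_X^(2*(2*K+2))))"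
    unfolding Q_def by (simp only: power_0 mult_zero_left mult_1_left gA[of 0 K, OF le0])
  have R: "((1 - fps_X ^ (2*K+1)) ^ 2 * Q K 0 + fps_X ^ (2*K+1) * (2 * Q K 0 + 2 * Q K 1)) * M K 0 =
     P (2*K) * ((1 - fps_X^(2*K+1))^2 * ((1 - fps_X^(2*(K+0+1))) * (1 - fps_X^(2*(K-0+1)))) +
      fps_X^(2*K+1) * (2 * ((1 - fps_X^(2*(K+0+1))) * (1 - fps_X^(2*(K-0+1)))) +
      2 * (fps_X^(1*1) * ((1 - fps_X^(2*(K-0))) * (1 - fps_X^(2*(K-0+1)))))))"
  proof -
    have "Q K 0 = 1 * g K 0" "Q K 1 = fps_X^(1*1) * g K (Suc 0)" unfolding Q_def by simp_all
    thus ?thesis by (simp only:) (rule distr_gen0[OF gB[OF le0] gC[OF le0]])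
  qed
  show ?thesis
    by (rule M_cancel[of _ K 0]) (simp only: L R ident0)
qed

lemma V_eq_Q: "V K j = Q K j"
proof (induction K arbitrary: j)
  case 0
  show ?case unfolding V_0 Q_def g_def by simp
next
  case (Suc K)
  show ?case
  proof (cases j)
    case 0
    show ?thesis unfolding 0 V_Suc_0 Q_rec0 Suc.IH ..
  next
    case (Suc i)
    show ?thesis unfolding Suc V_Suc_Suc Q_rec1 Suc.IH ..
  qed
qed

lemma cg_sum: "(\<And>j. j \<in> A \<Longrightarrow> cg L (f j) (h j)) \<Longrightarrow> cg L (\<Sum>j\<in>A. f j) (\<Sum>j\<in>A. h j)"
  unfolding cg_def sum_subtractf[symmetric] by (rule dvd_sum)

lemma P_cg_base: "L \<le> r \<Longrightarrow> cg (2*(L+1)) (P r) (P L)"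
proof (induction r rule: dec_induct)
  case base thus ?case by simp
next
  case (step n)
  have "cg (2*(L+1)) (1 - fps_X ^ (2 * Suc n)) 1"
  proof -
    have "fps_X ^ (2*(L+1)) dvd (fps_X ^ (2 * Suc n) :: rat fps)"
      using step(1) by (intro le_imp_power_dvd) simp
    hence "fps_X ^ (2*(L+1)) dvd - (fps_X ^ (2 * Suc n) :: rat fps)" by simp
    thus ?thesis unfolding cg_def by simp
  qed
  from cg_mult[OF step(3) this] show ?case unfolding P_Suc by simp
qed

lemma P_cg: "L \<le> r \<Longrightarrow> L \<le> s \<Longrightarrow> cg (2*(L+1)) (P r) (P s)"
  using P_cg_base cg_sym cg_trans by blast

lemma sq_ge: "2 * j \<le> j * j + (1::nat)"
  by (cases j) auto

lemma Q_cg: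
  assumes n: "n \<le> 2 * K" "K \<le> n"
  shows "cg (n+1) (Q K j) (fps_X ^ (j*j) * inverse (P n))"
proof (cases "j \<le> K")
  case True
  let ?L = "2*(K - j + 1)"
  have c1: "cg ?L (P (2*K)) (P n)" "cg ?L (P (K+j)) (P n)" "cg ?L (P (K-j)) (P n)"
    using n True by (intro P_cg; simp)+
  have nz: "P r $ 0 \<noteq> 0" for r by (simp add: P_nth0)
  have "cg ?L (P (2*K) * inverse (P (K+j)) * inverse (P (K-j))) (P n * inverse (P n) * inverse (P n))"
    by (intro cg_mult cg_inverse c1 nz)
  hence "cg ?L (g K j) (inverse (P n))" unfolding g_def P_inv using True by simp
  from cg_shift[OF this, of "j*j"]
  have "cg (?L + j*j) (Q K j) (fps_X ^ (j*j) * inverse (P n))" unfolding Q_def .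
  moreover have "n + 1 \<le> ?L + j*j"
  proof -
    obtain d where d: "K = j + d" using True le_iff_add by blast
    have h: "?L = 2*d + 2" using d by simp
    have "n \<le> 2*j + 2*d" using n(1) d by simp
    thus ?thesis unfolding h using sq_ge[of j] by linarith
  qed
  ultimately show ?thesis by (rule cg_mono)
next
  case False
  hence "Q K j = 0" unfolding Q_def by (simp add: g_big)
  moreover have "n + 1 \<le> j * j"
  proof -
    have "Suc K \<le> j" using False by simp
    hence "Suc K * Suc K \<le> j * j" by (intro mult_le_mono)
    thus ?thesis using n by simp
  qed
  ultimately show ?thesis using cg_sym[OF cg_zero_high] by simp
qed

definition lc :: "nat \<Rightarrow> (nat \<Rightarrow> int) \<Rightarrow> rat fps" where
  "lc K \<mu> = (\<Sum>j\<le>K. of_int (\<mu> j) * V K j)"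

lemma lc_diff: "lc K \<mu> - lc K \<nu> = lc K (\<lambda>j. \<mu> j - \<nu> j)"
  unfolding lc_def by (simp add: sum_subtractf[symmetric] algebra_simps)

lemma lc_sum: "finite A \<Longrightarrow> (\<Sum>s\<in>A. of_int (c s) * lc K (\<mu> s)) = lc K (\<lambda>j. \<Sum>s\<in>A. c s * \<mu> s j)"
  unfolding lc_def by (simp add: sum_distrib_left sum_distrib_right mult.assoc of_int_sum sum.swap[of _ A])

lemma lc_delta: "t \<le> K \<Longrightarrow> V K t = lc K (\<lambda>j. if j = t then 1 else 0)"
proof -
  assume t: "t \<le> K"
  have "lc K (\<lambda>j. if j = t then 1 else 0) = (\<Sum>j\<le>K. if j = t then V K j else 0)"
    unfolding lc_def by (intro sum.cong) auto
  also have "\<dots> = V K t" using t by (subst sum.delta) auto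
  finally show ?thesis by simp
qed

lemma V_split:
  assumes "t \<le> K"
  shows "V K t = W K t + (\<Sum>s\<in>{t<..K}. of_int (int ((2*s) choose (s+t))) * W K s)"
proof -
  have u: "{..K} = {..<t} \<union> ({t} \<union> {t<..K})" using assms by auto
  have z: "(\<Sum>s\<in>{..<t}. of_nat ((2*s) choose (s+t)) * W K s) = 0"
    by (intro sum.neutral) (auto simp: binomial_eq_0)
  have "V K t = (\<Sum>s\<in>{..<t}. of_nat ((2*s) choose (s+t)) * W K s) +
     ((\<Sum>s\<in>{t}. of_nat ((2*s) choose (s+t)) * W K s) + (\<Sum>s\<in>{t<..K}. of_nat ((2*s) choose (s+t)) * W K s))"
    unfolding V_def u by (subst sum.union_disjoint; auto simp: sum.union_disjoint)
  also have "\<dots> = W K t + (\<Sum>s\<in>{t<..K}. of_nat ((2*s) choose (s+t)) * W K s)"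
    unfolding z by (simp add: mult_2)
  finally show ?thesis by simp
qed

definition spanV :: "nat \<Rightarrow> nat \<Rightarrow> rat fps \<Rightarrow> bool" where
  "spanV K t F \<longleftrightarrow> (\<exists>\<mu>. (\<forall>j<t. \<mu> j = 0) \<and> F = lc K \<mu>)"

lemma W_span: "t \<le> K \<Longrightarrow> spanV K t (W K t)"
proof (induction "K - t" arbitrary: t rule: less_induct)
  case less
  have "\<forall>s\<in>{t<..K}. \<exists>\<mu>. (\<forall>j<s. \<mu> j = 0) \<and> W K s = lc K \<mu>"
  proof
    fix s assume s: "s \<in> {t<..K}"
    hence "K - s < K - t" "s \<le> K" by auto
    thus "\<exists>\<mu>. (\<forall>j<s. \<mu> j = 0) \<and> W K s = lc K \<mu>" using less(1) unfolding spanV_def by blast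
  qed
  then obtain \<mu> where mu0: "\<forall>s\<in>{t<..K}. (\<forall>j<s. \<mu> s j = 0) \<and> W K s = lc K (\<mu> s)"
    by (drule_tac bchoice) blast
  hence mu: "\<And>s. s \<in> {t<..K} \<Longrightarrow> (\<forall>j<s. \<mu> s j = 0) \<and> W K s = lc K (\<mu> s)" by blast
  have "W K t = V K t - (\<Sum>s\<in>{t<..K}. of_int (int ((2*s) choose (s+t))) * W K s)"
    using V_split[OF less(2)] by simp
  also have "(\<Sum>s\<in>{t<..K}. of_int (int ((2*s) choose (s+t))) * W K s) =
             (\<Sum>s\<in>{t<..K}. of_int (int ((2*s) choose (s+t))) * lc K (\<mu> s))"
    using mu by (intro sum.cong) auto
  also have "\<dots> = lc K (\<lambda>j. \<Sum>s\<in>{t<..K}. int ((2*s) choose (s+t)) * \<mu> s j)"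
    by (rule lc_sum) simp
  finally have e: "W K t = V K t - lc K (\<lambda>j. \<Sum>s\<in>{t<..K}. int ((2*s) choose (s+t)) * \<mu> s j)" .
  define \<nu> where "\<nu> = (\<lambda>j. (if j = t then 1 else 0) - (\<Sum>s\<in>{t<..K}. int ((2*s) choose (s+t)) * \<mu> s j))"
  have e2: "W K t = lc K \<nu>"
    unfolding e lc_delta[OF less(2)] lc_diff \<nu>_def ..
  have e3: "\<forall>j<t. \<nu> j = 0"
  proof (intro allI impI)
    fix j assume j: "j < t"
    have "(\<Sum>s\<in>{t<..K}. int ((2*s) choose (s+t)) * \<mu> s j) = 0"
      using mu j by (intro sum.neutral) auto
    thus "\<nu> j = 0" unfolding \<nu>_def using j by simp
  qed
  show ?case unfolding spanV_def using e2 e3 by blast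
qed

lemma central_even: "s \<ge> 1 \<Longrightarrow> even ((2*s) choose s)"
proof -
  assume "s \<ge> 1"
  then obtain r where r: "s = Suc r" by (cases s) auto
  have a: "((2*s) choose s) = (Suc (2*r+1) choose Suc r)" unfolding r by simp
  have b: "(Suc (2*r+1) choose Suc r) = ((2*r+1) choose r) + ((2*r+1) choose Suc r)"
    by (rule binomial_Suc_Suc)
  have c: "((2*r+1) choose r) = ((2*r+1) choose Suc r)"
    using binomial_symmetric[of r "2*r+1"] by (simp add: Suc_diff_le)
  show ?thesis unfolding a b c by simp
qed

lemma W0_span: "\<exists>\<nu>. \<nu> 0 = 0 \<and> W K 0 = lc K (\<lambda>j. (if j = 0 then 1 else 0) + 2 * \<nu> j)"
proof -
  have "\<forall>s\<in>{0<..K}. \<exists>\<mu>. (\<forall>j<s. \<mu> j = 0) \<and> W K s = lc K \<mu>"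
    using W_span unfolding spanV_def by auto
  then obtain \<mu> where mu0: "\<forall>s\<in>{0<..K}. (\<forall>j<s. \<mu> s j = 0) \<and> W K s = lc K (\<mu> s)"
    by (drule_tac bchoice) blast
  hence mu: "\<And>s. s \<in> {0<..K} \<Longrightarrow> (\<forall>j<s. \<mu> s j = 0) \<and> W K s = lc K (\<mu> s)" by blast
  have "\<forall>s\<in>{0<..K}. \<exists>c. int ((2*s) choose (s+0)) = 2 * c"
  proof
    fix s assume "s \<in> {0<..K}"
    hence "even ((2*s) choose s)" by (intro central_even) auto
    then obtain c where "((2*s) choose s) = 2 * c" by blast
    thus "\<exists>c. int ((2*s) choose (s+0)) = 2 * c" by (intro exI[of _ "int c"]) simp
  qed
  then obtain c where c0: "\<forall>s\<in>{0<..K}. int ((2*s) choose (s+0)) = 2 * c s"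
    by (drule_tac bchoice) blast
  hence c: "\<And>s. s \<in> {0<..K} \<Longrightarrow> int ((2*s) choose (s+0)) = 2 * c s" by blast
  have "W K 0 = V K 0 - (\<Sum>s\<in>{0<..K}. of_int (int ((2*s) choose (s+0))) * W K s)"
    using V_split[of 0 K] by simp
  also have "(\<Sum>s\<in>{0<..K}. of_int (int ((2*s) choose (s+0))) * W K s) =
             (\<Sum>s\<in>{0<..K}. of_int (2 * c s) * lc K (\<mu> s))"
    using mu c by (intro sum.cong) auto
  also have "\<dots> = lc K (\<lambda>j. \<Sum>s\<in>{0<..K}. 2 * c s * \<mu> s j)"
    by (rule lc_sum) simp
  finally have "W K 0 = lc K (\<lambda>j. (if j = 0 then 1 else 0) - (\<Sum>s\<in>{0<..K}. 2 * c s * \<mu> s j))"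
    unfolding lc_delta[OF le0] lc_diff .
  also have "(\<lambda>j. (if j = 0 then 1 else 0) - (\<Sum>s\<in>{0<..K}. 2 * c s * \<mu> s j)) =
     (\<lambda>j. (if j = 0 then 1 else 0) + 2 * (- (\<Sum>s\<in>{0<..K}. c s * \<mu> s j)))"
    by (simp add: sum_distrib_left mult.assoc sum_negf)
  finally have "W K 0 = lc K (\<lambda>j. (if j = 0 then 1 else 0) + 2 * (- (\<Sum>s\<in>{0<..K}. c s * \<mu> s j)))" .
  moreover have "(- (\<Sum>s\<in>{0<..K}. c s * \<mu> s 0)) = 0" using mu by simp
  ultimately show ?thesis by (intro exI[where x="\<lambda>j. - (\<Sum>s\<in>{0<..K}. c s * \<mu> s j)"] conjI)
qed

lemma sq8: "(a*a) mod 8 \<in> {0,1,4::nat}"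
proof -
  have r: "a mod 8 < 8" by simp
  have "(a*a) mod 8 = ((a mod 8)*(a mod 8)) mod 8" by (simp add: mod_mult_eq)
  moreover have "((a mod 8)*(a mod 8)) mod 8 \<in> {0,1,4}"
  proof -
    have "a mod 8 = 0 \<or> a mod 8 = 1 \<or> a mod 8 = 2 \<or> a mod 8 = 3 \<or> a mod 8 = 4 \<or> a mod 8 = 5 \<or> a mod 8 = 6 \<or> a mod 8 = 7" by presburger
    thus ?thesis by (elim disjE) simp_all
  qed
  ultimately show ?thesis by simp
qed
lemma sq9: "(a*a) mod 9 \<in> {0,1,4,7::nat}"
proof -
  have r: "a mod 9 < 9" by simp
  have "(a*a) mod 9 = ((a mod 9)*(a mod 9)) mod 9" by (simp add: mod_mult_eq)
  moreover have "((a mod 9)*(a mod 9)) mod 9 \<in> {0,1,4,7}"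
  proof -
    have "a mod 9 = 0 \<or> a mod 9 = 1 \<or> a mod 9 = 2 \<or> a mod 9 = 3 \<or> a mod 9 = 4 \<or> a mod 9 = 5 \<or> a mod 9 = 6 \<or> a mod 9 = 7 \<or> a mod 9 = 8" by presburger
    thus ?thesis by (elim disjE) simp_all
  qed
  ultimately show ?thesis by simp
qed
lemma aux8a: "x \<in> {0,1,4::nat} \<Longrightarrow> x \<notin> {3,6,7}" by auto
lemma aux9a: "x \<in> {0,1,4,7::nat} \<Longrightarrow> x \<notin> {3,6}" by auto
lemma aux8b: "x \<in> {0,1,4::nat} \<Longrightarrow> y \<in> {0,1,4} \<Longrightarrow> (x+y) mod 8 \<notin> {3,6,7}" by auto
lemma aux9b: "x \<in> {0,1,4,7::nat} \<Longrightarrow> y \<in> {0,1,4,7} \<Longrightarrow> (x+y) mod 9 \<notin> {3,6}" by auto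
lemma aux8c: "x \<in> {0,1,4::nat} \<Longrightarrow> y \<in> {0,1,4} \<Longrightarrow> z \<in> {0,1,4} \<Longrightarrow> (x+y+z) mod 8 \<noteq> 7" by auto
lemma nt1: "n = a*a \<Longrightarrow> n mod 8 \<notin> {3,6,7} \<and> n mod 9 \<notin> {3,6::nat}"
  using aux8a[OF sq8[of a]] aux9a[OF sq9[of a]] by simp
lemma nt2: "n = a*a + b*b \<Longrightarrow> n mod 8 \<notin> {3,6,7} \<and> n mod 9 \<notin> {3,6::nat}"
proof -
  assume n: "n = a*a + b*b"
  have "n mod 8 = ((a*a) mod 8 + (b*b) mod 8) mod 8" "n mod 9 = ((a*a) mod 9 + (b*b) mod 9) mod 9"
    unfolding n by (simp_all add: mod_add_eq)
  thus ?thesis using aux8b[OF sq8[of a] sq8[of b]] aux9b[OF sq9[of a] sq9[of b]] by simp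
qed
lemma nt3: "n = a*a + b*b + c*c \<Longrightarrow> n mod 8 \<noteq> (7::nat)"
proof -
  assume n: "n = a*a + b*b + c*c"
  have g: "(x + y + z) mod 8 = (x mod 8 + y mod 8 + z mod 8) mod (8::nat)" for x y z
  proof -
    have "(x + y + z) mod 8 = ((x + y) mod 8 + z mod 8) mod 8" by (simp add: mod_add_eq)
    also have "(x + y) mod 8 = (x mod 8 + y mod 8) mod 8" by (simp add: mod_add_eq)
    also have "((x mod 8 + y mod 8) mod 8 + z mod 8) mod 8 = (x mod 8 + y mod 8 + z mod 8) mod 8"
      by (metis add.assoc mod_add_left_eq)
    finally show ?thesis .
  qed
  have "n mod 8 = ((a*a) mod 8 + (b*b) mod 8 + (c*c) mod 8) mod 8"
    unfolding n by (rule g)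
  thus ?thesis using aux8c[OF sq8[of a] sq8[of b] sq8[of c]] by simp
qed

definition Zc :: "rat fps \<Rightarrow> bool" where "Zc f \<longleftrightarrow> (\<forall>i. f $ i \<in> \<int>)"

lemma Zc_mult: "Zc f \<Longrightarrow> Zc h \<Longrightarrow> Zc (f * h)"
  unfolding Zc_def fps_mult_nth by (auto intro!: Ints_sum Ints_mult)

lemma Zc_sumX: "Zc (\<Sum>j\<le>K. of_int (c j) * fps_X ^ (e j))"
  unfolding Zc_def fps_sum_nth fps_mult_of_int_nth by (auto intro!: Ints_sum Ints_mult)

lemma Zc_inv:
  assumes "Zc f" "f $ 0 = 1"
  shows "Zc (inverse f)"
proof -
  let ?g = "inverse f"
  have gf: "?g * f = 1" using assms(2) by (intro inverse_mult_eq_1) simp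
  have "?g $ n \<in> \<int>" for n
  proof (induction n rule: less_induct)
    case (less n)
    show ?case
    proof (cases n)
      case 0
      have "(?g * f) $ 0 = 1" using gf by simp
      thus ?thesis using 0 assms(2) by simp
    next
      case (Suc m)
      have "(?g * f) $ Suc m = 0" using gf by simp
      hence "(\<Sum>i=0..Suc m. ?g $ i * f $ (Suc m - i)) = 0" unfolding fps_mult_nth .
      hence "(\<Sum>i=0..m. ?g $ i * f $ (Suc m - i)) + ?g $ Suc m * f $ 0 = 0"
        by (simp add: sum.atLeast0_atMost_Suc)
      hence e: "?g $ Suc m = - (\<Sum>i=0..m. ?g $ i * f $ (Suc m - i))"
        using assms(2) by (simp add: eq_neg_iff_add_eq_0 add.commute)
      have "(\<Sum>i=0..m. ?g $ i * f $ (Suc m - i)) \<in> \<int>"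
        using less Suc assms(1) unfolding Zc_def by (auto intro!: Ints_sum Ints_mult)
      thus ?thesis unfolding Suc e by simp
    qed
  qed
  thus ?thesis unfolding Zc_def by blast
qed

lemma mult_nz: "(f * h) $ n \<noteq> 0 \<Longrightarrow> \<exists>i\<le>n. f $ i \<noteq> 0 \<and> h $ (n - i) \<noteq> (0::rat)"
proof (rule ccontr)
  assume a: "(f * h) $ n \<noteq> 0" "\<not> (\<exists>i\<le>n. f $ i \<noteq> 0 \<and> h $ (n - i) \<noteq> 0)"
  have "(\<Sum>i=0..n. f $ i * h $ (n - i)) = 0" using a(2) by (intro sum.neutral) auto
  thus False using a(1) unfolding fps_mult_nth by simp
qed

lemma supp_sq: "(\<Sum>j\<le>K. of_int (c j) * fps_X ^ (j*j) :: rat fps) $ i \<noteq> 0 \<Longrightarrow> \<exists>a. i = a*a"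
proof (rule ccontr)
  assume a: "(\<Sum>j\<le>K. of_int (c j) * fps_X ^ (j*j) :: rat fps) $ i \<noteq> 0" "\<nexists>a. i = a*a"
  have "(\<Sum>j\<le>K. of_int (c j) * fps_X ^ (j*j) :: rat fps) $ i = (\<Sum>j\<le>K. of_int (c j) * (fps_X ^ (j*j) :: rat fps) $ i)"
    unfolding fps_sum_nth fps_mult_of_int_nth ..
  also have "\<dots> = 0" using a(2) by (intro sum.neutral) auto
  finally show False using a(1) by simp
qed

lemma num_nth: "((numeral k :: rat fps) * f) $ n = numeral k * f $ n"
  by (metis fps_mult_of_int_nth(1) of_int_numeral)

lemma lc_cg:
  assumes "\<And>j. cg L (V K j) (fps_X ^ (j*j) * H)"
  shows "cg L (lc K \<mu>) ((\<Sum>j\<le>K. of_int (\<mu> j) * fps_X ^ (j*j)) * H)"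
proof -
  have "cg L (lc K \<mu>) (\<Sum>j\<le>K. of_int (\<mu> j) * (fps_X ^ (j*j) * H))"
    unfolding lc_def by (intro cg_sum cg_mult[OF cg_refl] assms)
  thus ?thesis by (simp add: sum_distrib_right mult.assoc)
qed

lemma theta_eq: "(\<Sum>j\<le>K. of_int ((if j = 0 then 1 else 0) + 2 * \<nu> j) * fps_X ^ (j*j) :: rat fps)
   = 1 + 2 * (\<Sum>j\<le>K. of_int (\<nu> j) * fps_X ^ (j*j))"
proof -
  have "(\<Sum>j\<le>K. of_int ((if j = 0 then 1 else 0) + 2 * \<nu> j) * fps_X ^ (j*j) :: rat fps)
     = (\<Sum>j\<le>K. (if j = 0 then 1 else 0)) + (\<Sum>j\<le>K. 2 * (of_int (\<nu> j) * fps_X ^ (j*j)))"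
    unfolding sum.distrib[symmetric] by (intro sum.cong) (auto simp: distrib_right)
  also have "(\<Sum>j\<le>K. (if j = 0 then 1 else 0) :: rat fps) = 1" by (subst sum.delta) auto
  finally show ?thesis by (simp add: sum_distrib_left)
qed

lemma main_coeff:
  fixes n t :: nat
  defines "K \<equiv> (n+1) div 2"
  shows "\<exists>b s2 s3 r. E K t $ n = b - 2*s2 + 4*s3 - 8*r \<and> r \<in> \<int> \<and> s3 \<in> \<int> \<and>
     ((\<nexists>a. n = a*a) \<longrightarrow> b = 0) \<and> ((\<nexists>a c. n = a*a + c*c) \<longrightarrow> s2 = 0) \<and>
     ((\<nexists>a c e. n = a*a + c*c + e*e) \<longrightarrow> s3 = 0)"
proof (cases "t \<le> K")
  case False
  hence "E K t = 0" by (intro E_big) simp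
  thus ?thesis by (intro exI[of _ 0]) simp
next
  case True
  have nK: "n \<le> 2 * K" "K \<le> n" unfolding K_def by presburger+
  define H where "H = inverse (P n)"
  have cgV: "cg (n+1) (V K j) (fps_X ^ (j*j) * H)" for j
    unfolding V_eq_Q H_def by (rule Q_cg[OF nK])
  obtain \<mu> where mu: "W K t = lc K \<mu>" using W_span[OF True] unfolding spanV_def by blast
  obtain \<nu> where nu: "\<nu> 0 = 0" "W K 0 = lc K (\<lambda>j. (if j = 0 then 1 else 0) + 2 * \<nu> j)"
    using W0_span by blast
  define B where "B = (\<Sum>j\<le>K. of_int (\<mu> j) * fps_X ^ (j*j) :: rat fps)"
  define S where "S = (\<Sum>j\<le>K. of_int (\<nu> j) * fps_X ^ (j*j) :: rat fps)"
  define \<theta> where "\<theta> = 1 + 2 * S"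
  have c1: "cg (n+1) (D K * E K t) (B * H)"
    using lc_cg[OF cgV, of \<mu>] unfolding B_def mu[symmetric] W_def .
  have c0: "cg (n+1) (D K) (\<theta> * H)"
    using lc_cg[OF cgV, of "\<lambda>j. (if j = 0 then 1 else 0) + 2 * \<nu> j"]
    unfolding nu(2)[symmetric] theta_eq W_def E_0 \<theta>_def S_def by simp
  have "cg (n+1) (\<theta> * (D K * E K t)) (\<theta> * (B * H))" by (rule cg_mult[OF cg_refl c1])
  moreover have "cg (n+1) (D K * B) (\<theta> * H * B)" by (rule cg_mult[OF c0 cg_refl])
  ultimately have "cg (n+1) (D K * (\<theta> * E K t)) (D K * B)"
    by (metis (no_types, lifting) cg_sym cg_trans mult.assoc mult.commute)
  hence c2: "cg (n+1) (\<theta> * E K t) B" by (rule cg_cancel) (simp add: D_nth0)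
  have S0: "S $ 0 = 0"
  proof -
    have "S $ 0 = (\<Sum>j\<le>K. of_int (\<nu> j) * (if j*j = 0 then 1 else 0))"
      unfolding S_def fps_sum_nth fps_mult_of_int_nth fps_X_power_nth by (intro sum.cong) auto
    also have "\<dots> = (\<Sum>j\<le>K. if j = 0 then of_int (\<nu> j) else 0)" by (intro sum.cong) auto
    also have "\<dots> = 0" using nu(1) by (subst sum.delta) auto
    finally show ?thesis .
  qed
  have th0: "\<theta> $ 0 = 1" unfolding \<theta>_def using S0 by (simp add: num_nth)
  define \<iota> where "\<iota> = inverse \<theta>"
  have it: "\<iota> * \<theta> = 1" "\<theta> * \<iota> = 1" unfolding \<iota>_def using th0
    by (auto intro: inverse_mult_eq_1 inverse_mult_eq_1')
  have "cg (n+1) (\<iota> * (\<theta> * E K t)) (\<iota> * B)" by (rule cg_mult[OF cg_refl c2])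
  hence "cg (n+1) (E K t) (\<iota> * B)" unfolding mult.assoc[symmetric] it(1) by simp
  hence En: "E K t $ n = (\<iota> * B) $ n" by (rule cg_nth) simp
  define R where "R = 1 - 2*S + 4*(S*S) - 8*(S*S*S*\<iota>)"
  have "\<theta> * R = (1 + 2*S) * (1 - 2*S + 4*(S*S)) - 8*(S*S*S*(\<theta>*\<iota>))"
    unfolding R_def \<theta>_def by algebra
  also have "\<dots> = 1" unfolding it(2) by algebra
  finally have tR: "\<theta> * R = 1" .
  have iR: "\<iota> = R"
  proof -
    have "\<iota> = \<iota> * (\<theta> * R)" unfolding tR by simp
    also have "\<dots> = R" unfolding mult.assoc[symmetric] it(1) by simp
    finally show ?thesis .
  qed
  have RB: "R * B = B - 2*(S*B) + 4*(S*(S*B)) - 8*(S*S*S*\<iota>*B)"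
    unfolding R_def by algebra
  have "\<iota> * B = R * B" using iR by simp
  hence "\<iota> * B = B - 2*(S*B) + 4*(S*(S*B)) - 8*(S*S*S*\<iota>*B)" unfolding RB .
  hence Ev: "E K t $ n = B $ n - 2*((S*B) $ n) + 4*((S*(S*B)) $ n) - 8*((S*S*S*\<iota>*B) $ n)"
    unfolding En by (simp add: num_nth)
  have ZB: "Zc B" unfolding B_def by (rule Zc_sumX)
  have ZS: "Zc S" unfolding S_def by (rule Zc_sumX)
  have Zth: "Zc \<theta>"
  proof -
    have te: "\<theta> = (\<Sum>j\<le>K. of_int ((if j = 0 then 1 else 0) + 2 * \<nu> j) * fps_X ^ (j*j))"
      unfolding theta_eq \<theta>_def S_def ..
    show ?thesis unfolding te by (rule Zc_sumX)
  qed
  have Zi: "Zc \<iota>" unfolding \<iota>_def by (rule Zc_inv[OF Zth th0])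
  have r: "(S*S*S*\<iota>*B) $ n \<in> \<int>" using Zc_mult[OF Zc_mult[OF Zc_mult[OF Zc_mult[OF ZS ZS] ZS] Zi] ZB]
    unfolding Zc_def by blast
  have s3: "(S*(S*B)) $ n \<in> \<int>" using Zc_mult[OF ZS Zc_mult[OF ZS ZB]] unfolding Zc_def by blast
  have sB: "B $ i \<noteq> 0 \<Longrightarrow> \<exists>a. i = a*a" for i unfolding B_def by (rule supp_sq)
  have sS: "S $ i \<noteq> 0 \<Longrightarrow> \<exists>a. i = a*a" for i unfolding S_def by (rule supp_sq)
  have sSB: "(S*B) $ i \<noteq> 0 \<Longrightarrow> \<exists>a c. i = a*a + c*c" for i
  proof -
    assume "(S*B) $ i \<noteq> 0"
    then obtain k where k: "k \<le> i" "S $ k \<noteq> 0" "B $ (i - k) \<noteq> 0" using mult_nz by blast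
    obtain a where a: "k = a*a" using sS k(2) by blast
    obtain c where c: "i - k = c*c" using sB k(3) by blast
    have "i = a*a + c*c" using k(1) a c by simp
    thus ?thesis by blast
  qed
  have sSSB: "(S*(S*B)) $ i \<noteq> 0 \<Longrightarrow> \<exists>a c e. i = a*a + c*c + e*e" for i
  proof -
    assume "(S*(S*B)) $ i \<noteq> 0"
    then obtain k where k: "k \<le> i" "S $ k \<noteq> 0" "(S*B) $ (i - k) \<noteq> 0" using mult_nz by blast
    obtain a where a: "k = a*a" using sS k(2) by blast
    obtain c e where c: "i - k = c*c + e*e" using sSB k(3) by blast
    have "i = a*a + c*c + e*e" using k(1) a c by simp
    thus ?thesis by blast
  qed
  show ?thesis
    apply (rule exI[of _ "B $ n"], rule exI[of _ "(S*B) $ n"], rule exI[of _ "(S*(S*B)) $ n"],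
           rule exI[of _ "(S*S*S*\<iota>*B) $ n"])
    using Ev r s3 sB[of n] sSB[of n] sSSB[of n] by blast
qed

lemma modd_E: "modd (-2) t n = E ((n+1) div 2) t $ n"
proof -
  have "Od ((n+1) div 2) = {k. odd k \<and> k \<le> n}" unfolding Od_def
  proof (intro Collect_cong)
    fix k :: nat show "(odd k \<and> k < 2 * ((n+1) div 2)) = (odd k \<and> k \<le> n)" by presburger
  qed
  thus ?thesis unfolding modd_def E_def fk_def by simp
qed

lemma res4:
  assumes "n mod 8 \<in> {3,6} \<or> n mod 9 \<in> {3,6}"
  shows "modd (-2) t n / 4 \<in> \<int>"
proof -
  obtain b s2 s3 r where o: "E ((n+1) div 2) t $ n = b - 2*s2 + 4*s3 - 8*r" "r \<in> \<int>" "s3 \<in> \<int>"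
    "(\<nexists>a. n = a*a) \<longrightarrow> b = 0" "(\<nexists>a c. n = a*a + c*c) \<longrightarrow> s2 = 0"
    using main_coeff[of n t] by blast
  have "\<nexists>a. n = a*a" using nt1 assms by blast
  hence b: "b = 0" using o(4) by blast
  have "\<nexists>a c. n = a*a + c*c" using nt2 assms by blast
  hence s2: "s2 = 0" using o(5) by blast
  have e: "modd (-2) t n = 4 * s3 - 8 * r" unfolding modd_E o(1) b s2 by simp
  have q: "modd (-2) t n / 4 = s3 - 2 * r" unfolding e by (simp add: diff_divide_distrib)
  show ?thesis unfolding q using o(2,3) by (intro Ints_diff Ints_mult) auto
qed

lemma res8:
  assumes "n mod 8 = 7"
  shows "modd (-2) t n / 8 \<in> \<int>"
proof -
  obtain b s2 s3 r where o: "E ((n+1) div 2) t $ n = b - 2*s2 + 4*s3 - 8*r" "r \<in> \<int>" "s3 \<in> \<int>"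
    "(\<nexists>a. n = a*a) \<longrightarrow> b = 0" "(\<nexists>a c. n = a*a + c*c) \<longrightarrow> s2 = 0"
    "(\<nexists>a c e. n = a*a + c*c + e*e) \<longrightarrow> s3 = 0"
    using main_coeff[of n t] by blast
  have "\<nexists>a. n = a*a" using nt1 assms by fastforce
  hence b: "b = 0" using o(4) by blast
  have "\<nexists>a c. n = a*a + c*c" using nt2 assms by fastforce
  hence s2: "s2 = 0" using o(5) by blast
  have "\<nexists>a c e. n = a*a + c*c + e*e" using nt3 assms by blast
  hence s3: "s3 = 0" using o(6) by blast
  have e: "modd (-2) t n = - 8 * r" unfolding modd_E o(1) b s2 s3 by simp
  have q: "modd (-2) t n / 8 = - r" unfolding e by simp
  show ?thesis unfolding q using o(2) by (intro Ints_minus)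
qed

theorem mainTheorem12:
  fixes t N :: nat
  assumes "t \<ge> 1"
  shows "(\<forall>r\<in>{3, 6}. modd (-2) t (8 * N + r) / 4 \<in> \<int>)
       \<and> (\<forall>r\<in>{3, 6}. modd (-2) t (9 * N + r) / 4 \<in> \<int>)
       \<and> modd (-2) t (8 * N + 7) / 8 \<in> \<int>"
proof (intro conjI ballI)
  fix r :: nat assume r: "r \<in> {3, 6}"
  show "modd (-2) t (8 * N + r) / 4 \<in> \<int>" by (rule res4) (use r in auto)
  show "modd (-2) t (9 * N + r) / 4 \<in> \<int>" by (rule res4) (use r in auto)
next
  show "modd (-2) t (8 * N + 7) / 8 \<in> \<int>" by (rule res8) simp
qed

end
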